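(* Let $m,q\ge1$ and let $r=(r_1,\dots,r_q)$ with $r_1,\dots,r_q$ i.i.d. $\mathrm{Exp}(1)$. For any distributions $\mu_1,\dots,\mu_m\in\Delta_q$, $$\mathbb P_r\big[\exists i,j\in[m]:\ \mathrm{GumbelTrick}(\mu_i,r)\ne\mathrm{GumbelTrick}(\mu_j,r)\big]\le\frac{\sum_{x\in[q]}\big(\max_{i\in[m]}\mu_i(x)-\min_{i\in[m]}\mu_i(x)\big)}{\sum_{x\in[q]}\max_{i\in[m]}\mu_i(x)}.$$
   Context: $\Delta_q$ is the probability simplex on $[q]$. $\mathrm{GumbelTrick}(\nu,r)$ outputs $\arg\min\{r_x/\nu(x): x\in[q]\}$ (with $r_x/0=+\infty$; ties occur with probability zero). *)

theory Defs
  imports "HOL-Probability.Probability"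
begin

definition prob_simplex :: "nat \<Rightarrow> (nat \<Rightarrow> real) set" where
  "prob_simplex q = {\<nu>. (\<forall>x<q. 0 \<le> \<nu> x) \<and> (\<Sum>x<q. \<nu> x) = 1}"

definition gumbel_ratio :: "(nat \<Rightarrow> real) \<Rightarrow> (nat \<Rightarrow> real) \<Rightarrow> nat \<Rightarrow> ereal" where
  "gumbel_ratio \<nu> r x = (if \<nu> x = 0 then \<infinity> else ereal (r x / \<nu> x))"

text \<open>GumbelTrick: argmin of r_x / nu(x) over x in [q]; ties (probability zero)
  are broken towards the smallest index.\<close>
definition GumbelTrick :: "nat \<Rightarrow> (nat \<Rightarrow> real) \<Rightarrow> (nat \<Rightarrow> real) \<Rightarrow> nat" where
  "GumbelTrick q \<nu> r = (LEAST x. x < q \<and> (\<forall>y<q. gumbel_ratio \<nu> r x \<le> gumbel_ratio \<nu> r y))"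

definition exp_iid :: "nat \<Rightarrow> (nat \<Rightarrow> real) measure" where
  "exp_iid q = PiM {..<q} (\<lambda>_. density lborel (exponential_density 1))"

end

theory Submission imports Defs begin



lemma (in prob_space) exp_race:
  fixes A B :: "'a \<Rightarrow> real"
  assumes a: "0 < a" and b: "0 < b"
    and dA: "distributed M lborel A (exponential_density a)"
    and dB: "distributed M lborel B (exponential_density b)"
    and ind: "indep_var borel A borel B"
  shows "prob {\<omega>\<in>space M. A \<omega> < B \<omega>} = a / (a + b)"
proof -
  let ?DA = "distr M borel A" and ?DB = "distr M borel B"
  have rvA[measurable]: "A \<in> borel_measurable M" and rvB[measurable]: "B \<in> borel_measurable M"
    using ind by (auto simp: indep_var_distribution_eq)
  have joint: "?DA \<Otimes>\<^sub>M ?DB = distr M (borel \<Otimes>\<^sub>M borel) (\<lambda>x. (A x, B x))"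
    using ind by (simp add: indep_var_distribution_eq)
  have DA: "?DA = density lborel (exponential_density a)"
  proof -
    have "?DA = distr M lborel A" by (rule distr_cong) auto
    then show ?thesis using dA by (simp add: distributed_def)
  qed
  interpret DB: prob_space ?DB by (rule prob_space_distr) simp
  let ?S = "{(s::real, t::real). s < t}"
  have S[measurable]: "?S \<in> sets (borel \<Otimes>\<^sub>M borel)"
  proof -
    have "{x\<in>space (borel \<Otimes>\<^sub>M borel). fst x < (snd x::real)} \<in> sets (borel \<Otimes>\<^sub>M (borel::real measure))"
      by measurable
    moreover have "{x\<in>space (borel \<Otimes>\<^sub>M borel). fst x < (snd x::real)} = ?S"
      by (auto simp: space_pair_measure)
    ultimately show ?thesis by simp
  qed
  have "emeasure M {\<omega>\<in>space M. A \<omega> < B \<omega>} = emeasure (distr M (borel \<Otimes>\<^sub>M borel) (\<lambda>x. (A x, B x))) ?S"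
    by (subst emeasure_distr) (auto intro!: arg_cong[where f="emeasure M"])
  also have "\<dots> = emeasure (?DA \<Otimes>\<^sub>M ?DB) ?S" by (simp add: joint)
  also have "\<dots> = (\<integral>\<^sup>+ s. emeasure ?DB (Pair s -` ?S) \<partial>?DA)"
    by (rule DB.emeasure_pair_measure_alt) (simp cong: sets_pair_measure_cong)
  also have "\<dots> = (\<integral>\<^sup>+ s. ennreal (exp (- s * b)) \<partial>?DA)"
  proof (rule nn_integral_cong_AE)
    have "AE s in density lborel (exponential_density a). 0 \<le> s"
      by (subst AE_density) (auto simp: exponential_density_def)
    moreover have "emeasure ?DB (Pair s -` ?S) = ennreal (exp (- s * b))" if "0 \<le> s" for s
    proof -
      have "Pair s -` ?S = {s<..}" by auto
      then have "emeasure ?DB (Pair s -` ?S) = emeasure M {\<omega>\<in>space M. s < B \<omega>}"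
        by (subst emeasure_distr) (auto intro!: arg_cong[where f="emeasure M"])
      also have "\<dots> = ennreal (exp (- s * b))"
        using exponential_distributedD_gt[OF dB \<open>0 \<le> s\<close> b] by (simp add: emeasure_eq_measure)
      finally show ?thesis .
    qed
    ultimately show "AE s in ?DA. emeasure ?DB (Pair s -` ?S) = ennreal (exp (- s * b))"
      unfolding DA by (auto elim: eventually_mono)
  qed
  also have "\<dots> = (\<integral>\<^sup>+ s. ennreal (exponential_density a s) * ennreal (exp (- s * b)) \<partial>lborel)"
    unfolding DA by (subst nn_integral_density) auto
  also have "\<dots> = (\<integral>\<^sup>+ s. ennreal (a / (a + b)) * ennreal (exponential_density (a + b) s) \<partial>lborel)"
  proof (rule nn_integral_cong)
    fix s :: real
    have "exponential_density a s * exp (- s * b) = a / (a + b) * exponential_density (a + b) s"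
      using a b by (auto simp: exponential_density_def field_simps mult_exp_exp)
    then show "ennreal (exponential_density a s) * ennreal (exp (- s * b)) = ennreal (a / (a + b)) * ennreal (exponential_density (a + b) s)"
      using a b by (simp add: ennreal_mult'[symmetric] exponential_density_nonneg)
  qed
  also have "\<dots> = ennreal (a / (a + b)) * (\<integral>\<^sup>+ s. ennreal (exponential_density (a + b) s) \<partial>lborel)"
    by (rule nn_integral_cmult) auto
  also have "(\<integral>\<^sup>+ s. ennreal (exponential_density (a + b) s) \<partial>lborel) = 1"
  proof -
    interpret E: prob_space "density lborel (exponential_density (a + b))"
      using a b by (intro prob_space_exponential_density) simp
    have "(\<integral>\<^sup>+ s. ennreal (exponential_density (a + b) s) \<partial>lborel) = emeasure (density lborel (exponential_density (a + b))) UNIV"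
      by (subst emeasure_density) auto
    also have "\<dots> = 1" using E.emeasure_space_1 by simp
    finally show ?thesis .
  qed
  finally have "emeasure M {\<omega>\<in>space M. A \<omega> < B \<omega>} = ennreal (a / (a + b))" by simp
  then show ?thesis using a b by (simp add: emeasure_eq_measure)
qed
lemma exp_comp_prob: "prob_space (density lborel (exponential_density 1))"
  by (rule prob_space_exponential_density) simp

lemma exp_iid_prob: "prob_space (exp_iid q)"
  unfolding exp_iid_def by (intro prob_space_PiM exp_comp_prob)

lemma exp_iid_coord_distr:
  assumes "y < q"
  shows "distributed (exp_iid q) lborel (\<lambda>r. r y) (exponential_density 1)"
proof -
  let ?N = "density lborel (\<lambda>x. ennreal (exponential_density 1 x))"
  have "distr (exp_iid q) lborel (\<lambda>r. r y) = distr (exp_iid q) ?N (\<lambda>r. r y)"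
    by (rule distr_cong) auto
  also have "\<dots> = ?N" unfolding exp_iid_def
    by (rule distr_PiM_component) (use assms exp_comp_prob in auto)
  finally have 1: "distr (exp_iid q) lborel (\<lambda>r. r y) = ?N" .
  have 2: "(\<lambda>r. r y) \<in> measurable (exp_iid q) lborel"
  proof -
    have "(\<lambda>r. r y) \<in> measurable (exp_iid q) ?N" unfolding exp_iid_def
      using assms by (intro measurable_component_singleton) auto
    then show ?thesis by (simp cong: measurable_cong_sets)
  qed
  show ?thesis unfolding distributed_def using 1 2 by auto
qed

lemma exp_iid_indep:
  assumes "q \<ge> 1"
  shows "prob_space.indep_vars (exp_iid q) (\<lambda>_. borel) (\<lambda>y r. r y) {..<q}"
proof -
  interpret P: prob_space "exp_iid q" by (rule exp_iid_prob)
  let ?N = "density lborel (\<lambda>x. ennreal (exponential_density 1 x))"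
  have rv: "P.random_variable ?N (\<lambda>r::nat\<Rightarrow>real. r i)" for i
  proof (cases "i < q")
    case True then show ?thesis
      using measurable_component_singleton[of i "{..<q}" "\<lambda>_. ?N", folded exp_iid_def] by (simp cong: measurable_cong_sets)
  next
    case False
    have "(\<lambda>r::nat\<Rightarrow>real. undefined::real) \<in> measurable (exp_iid q) ?N" by simp
    moreover have "\<And>r. r \<in> space (exp_iid q) \<Longrightarrow> r i = undefined"
      using False unfolding exp_iid_def by (auto simp: space_PiM PiE_def extensional_def)
    ultimately show ?thesis by (subst measurable_cong[where g="\<lambda>_. undefined"]) auto
  qed
  have "P.indep_vars (\<lambda>_. ?N) (\<lambda>y r. r y) {..<q}"
  proof (subst P.indep_vars_iff_distr_eq_PiM)
    show "{..<q} \<noteq> {}" using assms by (auto simp: lessThan_empty_iff)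
    show "P.random_variable ?N (\<lambda>r. r i)" for i by (rule rv)
    have "distr (exp_iid q) (\<Pi>\<^sub>M i\<in>{..<q}. ?N) (\<lambda>x. \<lambda>i\<in>{..<q}. x i) = distr (exp_iid q) (exp_iid q) (\<lambda>x. x)"
      by (rule distr_cong) (auto simp: exp_iid_def space_PiM PiE_def extensional_def restrict_def fun_eq_iff)
    also have "\<dots> = exp_iid q" by simp
    also have "\<dots> = (\<Pi>\<^sub>M i\<in>{..<q}. distr (exp_iid q) ?N (\<lambda>r. r i))"
      unfolding exp_iid_def
      by (rule PiM_cong) (auto intro!: distr_PiM_component[symmetric] exp_comp_prob)
    finally show "distr (exp_iid q) (\<Pi>\<^sub>M i\<in>{..<q}. ?N) (\<lambda>x. \<lambda>i\<in>{..<q}. x i) = (\<Pi>\<^sub>M i\<in>{..<q}. distr (exp_iid q) ?N (\<lambda>r. r i))" .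
  qed
  then show ?thesis
    unfolding P.indep_vars_def by (simp cong: measurable_cong_sets)
qed

lemma exp_iid_coord_meas[measurable]: "(\<lambda>r. r y) \<in> borel_measurable (exp_iid q)"
proof (cases "y < q")
  case True then show ?thesis
    using exp_iid_coord_distr[OF True] by (auto dest!: distributed_measurable)
next
  case False
  have "(\<lambda>r::nat\<Rightarrow>real. undefined::real) \<in> borel_measurable (exp_iid q)" by simp
  moreover have "\<And>r. r \<in> space (exp_iid q) \<Longrightarrow> r y = undefined"
    using False unfolding exp_iid_def by (auto simp: space_PiM PiE_def extensional_def)
  ultimately show ?thesis by (subst measurable_cong[where g="\<lambda>_. undefined"]) auto
qed

lemma (in prob_space) prob_inter_one:
  assumes "A \<in> events" "B \<in> events" "prob B = 1"
  shows "prob A \<le> prob (A \<inter> B)"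
proof -
  have "prob A = prob (A \<inter> B) + prob (A - B)"
    using assms by (subst finite_measure_Union[symmetric]) (auto intro!: arg_cong[where f=prob])
  moreover have "prob (A - B) \<le> prob (space M - B)"
    using assms sets.sets_into_space by (intro finite_measure_mono) auto
  moreover have "prob (space M - B) = 0" using assms prob_compl by simp
  ultimately show ?thesis using measure_nonneg[of M "A - B"] by linarith
qed

lemma (in prob_space) exp_race_Min:
  fixes Z :: "nat \<Rightarrow> 'a \<Rightarrow> real"
  assumes Y: "finite Y" "Y \<noteq> {}" "x \<notin> Y" and a: "0 < a" and b: "\<And>y. y \<in> Y \<Longrightarrow> 0 < b y"
    and dx: "distributed M lborel (Z x) (exponential_density a)"
    and dy: "\<And>y. y \<in> Y \<Longrightarrow> distributed M lborel (Z y) (exponential_density (b y))"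
    and ind: "indep_vars (\<lambda>_. borel) Z (insert x Y)"
  shows "prob {\<omega>\<in>space M. Z x \<omega> < Min ((\<lambda>y. Z y \<omega>) ` Y)} = a / (a + (\<Sum>y\<in>Y. b y))"
proof (rule exp_race[OF a _ dx])
  show "0 < sum b Y" using Y b by (intro sum_pos) auto
  show "distributed M lborel (\<lambda>\<omega>. Min ((\<lambda>y. Z y \<omega>) ` Y)) (exponential_density (sum b Y))"
    using Y b dy by (intro exponential_distributed_Min indep_vars_subset[OF ind]) auto
  show "indep_var borel (Z x) borel (\<lambda>\<omega>. Min ((\<lambda>y. Z y \<omega>) ` Y))"
    using Y ind by (intro indep_vars_Min) auto
qed

lemma event_bound:
  fixes Lx :: real and Mx :: "nat \<Rightarrow> real"
  assumes q: "q \<ge> 1" and x: "x < q" and L: "0 < Lx" "Lx \<le> Mx x" and Mnn: "\<And>y. y < q \<Longrightarrow> 0 \<le> Mx y"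
  shows "Lx / (\<Sum>y<q. Mx y) \<le> measure (exp_iid q)
     {r \<in> space (exp_iid q). 0 \<le> r x \<and> (\<forall>y<q. y \<noteq> x \<longrightarrow> 0 < Mx y \<longrightarrow> r x / Lx < r y / Mx y)}"
    (is "_ \<le> measure _ ?E")
proof -
  interpret P: prob_space "exp_iid q" by (rule exp_iid_prob)
  define Y where "Y = {y. y < q \<and> y \<noteq> x \<and> 0 < Mx y}"
  define w where "w y = (if y = x then Lx else Mx y)" for y
  define Z where "Z y r = inverse (w y) * r y" for y and r :: "nat \<Rightarrow> real"
  have finY: "finite Y" and xY: "x \<notin> Y" and Yq: "Y \<subseteq> {..<q}" by (auto simp: Y_def)
  have wpos: "0 < w y" if "y \<in> insert x Y" for y using that L by (auto simp: w_def Y_def)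
  have S: "Lx + (\<Sum>y\<in>Y. Mx y) \<le> (\<Sum>y<q. Mx y)"
  proof -
    have "Lx + (\<Sum>y\<in>Y. Mx y) \<le> Mx x + (\<Sum>y\<in>Y. Mx y)" using L by simp
    also have "\<dots> = (\<Sum>y\<in>insert x Y. Mx y)" using finY xY by simp
    also have "\<dots> \<le> (\<Sum>y<q. Mx y)"
      using Yq x Mnn by (intro sum_mono2) auto
    finally show ?thesis .
  qed
  have Spos: "0 < Lx + (\<Sum>y\<in>Y. Mx y)" using L by (auto intro!: add_pos_nonneg sum_nonneg simp: Y_def)
  have bound: "Lx / (\<Sum>y<q. Mx y) \<le> Lx / (Lx + (\<Sum>y\<in>Y. Mx y))"
    using S Spos L by (intro divide_left_mono) auto
  have dZ: "distributed (exp_iid q) lborel (Z y) (exponential_density (w y))" if "y \<in> insert x Y" for y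
  proof -
    have "y < q" using that x Yq by auto
    from P.erlang_distributed_mult_const[OF exp_iid_coord_distr[OF this], of "inverse (w y)"]
    show ?thesis using wpos[OF that] unfolding Z_def[abs_def] by (simp add: field_simps)
  qed
  have indZ: "P.indep_vars (\<lambda>_. borel) Z (insert x Y)"
    unfolding Z_def
    by (rule P.indep_vars_compose2[where X="\<lambda>y r. r y" and M'="\<lambda>_. borel"],
        rule P.indep_vars_subset[OF exp_iid_indep[OF q]]) (use x Yq in auto)
  have pos: "P.prob {r\<in>space (exp_iid q). 0 < r x} = 1"
  proof -
    have "P.prob {r\<in>space (exp_iid q). r x \<le> 0} = 0"
      using P.exponential_distributedD_le[OF exp_iid_coord_distr[OF x], of 0] by simp
    moreover have "{r\<in>space (exp_iid q). 0 < r x} = space (exp_iid q) - {r\<in>space (exp_iid q). r x \<le> 0}"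
      by auto
    moreover have "{r\<in>space (exp_iid q). r x \<le> 0} \<in> P.events"
      using exp_iid_coord_distr[OF x] by (auto dest!: distributed_measurable)
    ultimately show ?thesis by (simp add: P.prob_compl)
  qed
  have Emeas: "?E \<in> P.events" by measurable
  show ?thesis
  proof (cases "Y = {}")
    case True
    have "{r\<in>space (exp_iid q). 0 < r x} \<subseteq> ?E" using True by (auto simp: Y_def)
    then have "P.prob {r\<in>space (exp_iid q). 0 < r x} \<le> P.prob ?E"
      using Emeas by (intro P.finite_measure_mono) auto
    then have "1 \<le> P.prob ?E" using pos by simp
    moreover have "Lx / (\<Sum>y<q. Mx y) \<le> 1" using bound True L by simp
    ultimately show ?thesis by linarith
  next
    case False
    let ?A = "{r\<in>space (exp_iid q). Z x r < Min ((\<lambda>y. Z y r) ` Y)}"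
    have wx: "w x = Lx" by (simp add: w_def)
    have "P.prob ?A = Lx / (Lx + (\<Sum>y\<in>Y. Mx y))"
    proof (rule P.exp_race_Min[OF finY False xY L(1)])
      show "0 < Mx y" if "y \<in> Y" for y using that by (auto simp: Y_def)
      show "distributed (exp_iid q) lborel (Z x) (exponential_density Lx)"
        using dZ[of x] wx by simp
      show "distributed (exp_iid q) lborel (Z y) (exponential_density (Mx y))" if "y \<in> Y" for y
      proof -
        have "y \<noteq> x" using that xY by auto
        then show ?thesis using dZ[of y] that by (simp add: w_def)
      qed
      show "P.indep_vars (\<lambda>_. borel) Z (insert x Y)" by (rule indZ)
    qed
    moreover have Ameas: "?A \<in> P.events"
    proof -
      have [measurable]: "(\<lambda>r. Min ((\<lambda>y. Z y r) ` Y)) \<in> borel_measurable (exp_iid q)"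
        using finY unfolding Z_def by (intro borel_measurable_Min) auto
      have [measurable]: "Z x \<in> borel_measurable (exp_iid q)" unfolding Z_def by measurable
      show ?thesis by measurable
    qed
    moreover have "?A \<inter> {r\<in>space (exp_iid q). 0 < r x} \<subseteq> ?E"
    proof safe
      fix r assume r: "r \<in> space (exp_iid q)" "Z x r < Min ((\<lambda>y. Z y r) ` Y)" "0 < r x"
      show "0 \<le> r x" using r by simp
      fix y assume y: "y < q" "y \<noteq> x" "0 < Mx y"
      then have "y \<in> Y" by (simp add: Y_def)
      then have "Z x r < Z y r" using r finY False by (auto simp: Min_gr_iff)
      then show "r x / Lx < r y / Mx y" using y by (simp add: Z_def w_def field_simps)
    qed
    then have "P.prob (?A \<inter> {r\<in>space (exp_iid q). 0 < r x}) \<le> P.prob ?E"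
      using Emeas by (intro P.finite_measure_mono) auto
    moreover have "P.prob ?A \<le> P.prob (?A \<inter> {r\<in>space (exp_iid q). 0 < r x})"
      using Ameas pos by (intro P.prob_inter_one) auto
    ultimately show ?thesis using bound by linarith
  qed
qed

lemma gumbel_is_x:
  fixes \<nu> Mx :: "nat \<Rightarrow> real"
  assumes nn: "\<And>y. y < q \<Longrightarrow> 0 \<le> \<nu> y" and x: "x < q" and L: "0 < Lx" "Lx \<le> \<nu> x"
    and M: "\<And>y. y < q \<Longrightarrow> \<nu> y \<le> Mx y" and r0: "0 \<le> r x"
    and E: "\<And>y. y < q \<Longrightarrow> y \<noteq> x \<Longrightarrow> 0 < Mx y \<Longrightarrow> r x / Lx < r y / Mx y"
  shows "GumbelTrick q \<nu> r = x"
proof -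
  have strict: "gumbel_ratio \<nu> r x < gumbel_ratio \<nu> r y" if y: "y < q" "y \<noteq> x" for y
  proof (cases "\<nu> y = 0")
    case True then show ?thesis using L by (simp add: gumbel_ratio_def)
  next
    case False
    then have vy: "0 < \<nu> y" using nn[OF y(1)] by simp
    then have My: "0 < Mx y" using M[OF y(1)] by simp
    have "r x / \<nu> x \<le> r x / Lx" using L r0 by (intro divide_left_mono) auto
    also have "\<dots> < r y / Mx y" using E[OF y My] .
    finally have 1: "r x / \<nu> x < r y / Mx y" .
    have "0 \<le> r x / Lx" using r0 L by simp
    then have "0 < r y / Mx y" using E[OF y My] by linarith
    then have "0 < r y" using My by (simp add: zero_less_divide_iff)
    then have "r y / Mx y \<le> r y / \<nu> y" using vy M[OF y(1)] by (intro divide_left_mono) auto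
    with 1 have "r x / \<nu> x < r y / \<nu> y" by linarith
    then show ?thesis using vy L by (simp add: gumbel_ratio_def)
  qed
  show ?thesis unfolding GumbelTrick_def
  proof (rule Least_equality)
    show "x < q \<and> (\<forall>y<q. gumbel_ratio \<nu> r x \<le> gumbel_ratio \<nu> r y)"
      using x strict by (metis order.order_iff_strict)
    fix z assume z: "z < q \<and> (\<forall>y<q. gumbel_ratio \<nu> r z \<le> gumbel_ratio \<nu> r y)"
    show "x \<le> z"
    proof (rule ccontr)
      assume "\<not> x \<le> z"
      then have "z \<noteq> x" by auto
      then have "gumbel_ratio \<nu> r x < gumbel_ratio \<nu> r z" using strict z by auto
      moreover have "gumbel_ratio \<nu> r z \<le> gumbel_ratio \<nu> r x" using z x by auto
      ultimately show False by simp
    qed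
  qed
qed

theorem lemma2p10:
  fixes m q :: nat and \<mu> :: "nat \<Rightarrow> nat \<Rightarrow> real"
  assumes "m \<ge> 1" and "q \<ge> 1"
    and "\<And>i. i < m \<Longrightarrow> \<mu> i \<in> prob_simplex q"
  shows "measure (exp_iid q)
           {r \<in> space (exp_iid q). \<exists>i<m. \<exists>j<m. GumbelTrick q (\<mu> i) r \<noteq> GumbelTrick q (\<mu> j) r}
         \<le> (\<Sum>x<q. Max ((\<lambda>i. \<mu> i x) ` {..<m}) - Min ((\<lambda>i. \<mu> i x) ` {..<m}))
           / (\<Sum>x<q. Max ((\<lambda>i. \<mu> i x) ` {..<m}))"
proof -
  interpret P: prob_space "exp_iid q" by (rule exp_iid_prob)
  define Mx where "Mx y = Max ((\<lambda>i. \<mu> i y) ` {..<m})" for y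
  define Lx where "Lx y = Min ((\<lambda>i. \<mu> i y) ` {..<m})" for y
  have ne: "{..<m} \<noteq> {}" using assms(1) by (auto simp: lessThan_empty_iff)
  have nn: "0 \<le> \<mu> i y" if "i < m" "y < q" for i y
    using assms(3)[OF that(1)] that(2) by (auto simp: prob_simplex_def)
  have sum1: "(\<Sum>y<q. \<mu> i y) = 1" if "i < m" for i
    using assms(3)[OF that] by (auto simp: prob_simplex_def)
  have Mge: "\<mu> i y \<le> Mx y" if "i < m" for i y
    unfolding Mx_def using that by (intro Max_ge) auto
  have Lle: "Lx y \<le> \<mu> i y" if "i < m" for i y
    unfolding Lx_def using that by (intro Min_le) auto
  have Lnn: "0 \<le> Lx y" if "y < q" for y
    unfolding Lx_def using ne nn that by (subst Min_ge_iff) auto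
  have Mnn: "0 \<le> Mx y" if "y < q" for y
    using Mge[of 0 y] nn[of 0 y] assms(1) that by auto
  have LM: "Lx y \<le> Mx y" for y using Lle[of 0 y] Mge[of 0 y] assms(1) by auto
  define S where "S = (\<Sum>y<q. Mx y)"
  have S1: "1 \<le> S"
  proof -
    have "1 = (\<Sum>y<q. \<mu> 0 y)" using sum1[of 0] assms(1) by simp
    also have "\<dots> \<le> S" unfolding S_def using Mge[of 0] assms(1) by (intro sum_mono) auto
    finally show ?thesis .
  qed
  define E where "E x = {r \<in> space (exp_iid q). 0 \<le> r x \<and>
      (\<forall>y<q. y \<noteq> x \<longrightarrow> 0 < Mx y \<longrightarrow> r x / Lx x < r y / Mx y)}" for x
  define X where "X = {x. x < q \<and> 0 < Lx x}"
  have finX: "finite X" by (simp add: X_def)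
  have Emeas: "E x \<in> P.events" for x unfolding E_def by measurable
  have Ebound: "Lx x / S \<le> P.prob (E x)" if "x \<in> X" for x
    unfolding S_def E_def using that assms(2) LM Mnn by (intro event_bound) (auto simp: X_def)
  have gum: "GumbelTrick q (\<mu> i) r = x" if "x \<in> X" "r \<in> E x" "i < m" for x r i
    using that by (intro gumbel_is_x[where Lx="Lx x" and Mx=Mx])
      (auto simp: X_def E_def intro: nn Lle Mge)
  have disj: "disjoint_family_on E X"
    unfolding disjoint_family_on_def
  proof (intro ballI impI)
    fix x x' assume "x \<in> X" "x' \<in> X" "x \<noteq> x'"
    then show "E x \<inter> E x' = {}" using gum[of x _ 0] gum[of x' _ 0] assms(1) by fastforce
  qed
  let ?D = "{r \<in> space (exp_iid q). \<exists>i<m. \<exists>j<m. GumbelTrick q (\<mu> i) r \<noteq> GumbelTrick q (\<mu> j) r}"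
  let ?U = "\<Union>x\<in>X. E x"
  have Umeas: "?U \<in> P.events" using finX Emeas by auto
  have "?D \<subseteq> space (exp_iid q) - ?U"
    using gum by fastforce
  then have "P.prob ?D \<le> P.prob (space (exp_iid q) - ?U)"
    using Umeas by (intro P.finite_measure_mono) auto
  also have "\<dots> = 1 - P.prob ?U" using Umeas by (rule P.prob_compl)
  also have "P.prob ?U = (\<Sum>x\<in>X. P.prob (E x))"
    using finX Emeas disj by (intro P.finite_measure_finite_Union) auto
  finally have D1: "P.prob ?D \<le> 1 - (\<Sum>x\<in>X. P.prob (E x))" .
  have "(\<Sum>x<q. Lx x / S) = (\<Sum>x\<in>X. Lx x / S)"
  proof (rule sum.mono_neutral_right)
    show "\<forall>x\<in>{..<q} - X. Lx x / S = 0" using Lnn by (force simp: X_def)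
  qed (auto simp: X_def)
  also have "\<dots> \<le> (\<Sum>x\<in>X. P.prob (E x))"
    using Ebound by (intro sum_mono) auto
  finally have "P.prob ?D \<le> 1 - (\<Sum>x<q. Lx x / S)" using D1 by linarith
  then have "P.prob ?D \<le> 1 - (\<Sum>x<q. Lx x) / S" by (simp add: sum_divide_distrib)
  also have "1 - (\<Sum>x<q. Lx x) / S = (\<Sum>x<q. Mx x - Lx x) / S"
    using S1 by (simp add: sum_subtractf S_def field_simps)
  finally show ?thesis unfolding Mx_def Lx_def S_def .
qed
end
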